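(* Let $d$ be an odd prime, $1\le r\le d$, and let $A\in\mathbb{R}^{rd\times rd}$ be the matrix defined in the context. Let $b,\bar b\in\{0,1\}^{rd}$ be independent and uniformly random, written in blocks $b=(b^{(0)},\dots,b^{(r-1)})$ with $b^{(j)}\in\{0,1\}^d$ (similarly $\bar b$), and define $\delta\in\{-2,0,2\}^{rd}$ by $\delta^{(j)}_k=(-1)^{b^{(j)}_k}-(-1)^{\bar b^{(j)}_k}$. Then $\mathbb{E}[\delta^TA\delta]=2d^2r$, and there exist absolute constants $c,C>0$ such that $$\Pr\Big[\delta^TA\delta\le\frac{d^2r}2\Big]\le Ce^{-crd}.$$
   Context: With $\omega_d=e^{2\pi i/d}$ and $j,k,\ell\in[d]=\{0,\dots,d-1\}$, let $\ket{\varphi^{(j)}_k}=\frac1{\sqrt d}\sum_{\ell}\omega_d^{-k\ell+j\ell^2+k^2}\ket\ell$, $\alpha^{(j,j')}_{k,k'}=\langle\varphi^{(j)}_k|\varphi^{(j')}_{k'}\rangle$, $S^{(j,j')}=\sum_{k,k'}\alpha^{(j,j')}_{k,k'}$, and let $A$ have blocks indexed by $j,j'\in[r]$ with entries $A^{(j,j')}_{k,k'}=\mathrm{Re}\big[\alpha^{(j,j')}_{k,k'}\overline{S^{(j,j')}}\big]$; $\delta^TA\delta=\sum_{j,j',k,k'}\delta^{(j)}_kA^{(j,j')}_{k,k'}\delta^{(j')}_{k'}$. *)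

theory Defs
  imports "HOL-Probability.Probability"
begin

definition omega_pow :: "nat \<Rightarrow> int \<Rightarrow> complex" where
  "omega_pow d n = cis (2 * pi * of_int n / real d)"

text \<open>phi^{(j)}_k evaluated at basis index l.\<close>
definition phi :: "nat \<Rightarrow> nat \<Rightarrow> nat \<Rightarrow> nat \<Rightarrow> complex" where
  "phi d j k l = complex_of_real (1 / sqrt (real d)) *
     omega_pow d (- int k * int l + int j * int l ^ 2 + int k ^ 2)"

definition alpha :: "nat \<Rightarrow> nat \<Rightarrow> nat \<Rightarrow> nat \<Rightarrow> nat \<Rightarrow> complex" where
  "alpha d j j' k k' = (\<Sum>l<d. cnj (phi d j k l) * phi d j' k' l)"

definition S_sum :: "nat \<Rightarrow> nat \<Rightarrow> nat \<Rightarrow> complex" where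
  "S_sum d j j' = (\<Sum>k<d. \<Sum>k'<d. alpha d j j' k k')"

definition A_entry :: "nat \<Rightarrow> nat \<Rightarrow> nat \<Rightarrow> nat \<Rightarrow> nat \<Rightarrow> real" where
  "A_entry d j j' k k' = Re (alpha d j j' k k' * cnj (S_sum d j j'))"

text \<open>delta^T A delta, with delta indexed by (block j, position k).\<close>
definition quad_form :: "nat \<Rightarrow> nat \<Rightarrow> (nat \<times> nat \<Rightarrow> real) \<Rightarrow> real" where
  "quad_form d r \<delta> = (\<Sum>j<r. \<Sum>j'<r. \<Sum>k<d. \<Sum>k'<d.
      \<delta> (j, k) * A_entry d j j' k k' * \<delta> (j', k'))"

text \<open>Bit strings b in {0,1}^{rd}, indexed by (j,k), j<r, k<d (True = 1).\<close>
definition bitstrings :: "nat \<Rightarrow> nat \<Rightarrow> (nat \<times> nat \<Rightarrow> bool) set" where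
  "bitstrings r d = ({..<r} \<times> {..<d}) \<rightarrow>\<^sub>E (UNIV :: bool set)"

definition sgn_bit :: "bool \<Rightarrow> real" where
  "sgn_bit b = (if b then -1 else 1)"

definition delta_of :: "(nat \<times> nat \<Rightarrow> bool) \<Rightarrow> (nat \<times> nat \<Rightarrow> bool) \<Rightarrow> nat \<times> nat \<Rightarrow> real" where
  "delta_of b b' jk = sgn_bit (b jk) - sgn_bit (b' jk)"

definition bit_pairs :: "nat \<Rightarrow> nat \<Rightarrow> ((nat \<times> nat \<Rightarrow> bool) \<times> (nat \<times> nat \<Rightarrow> bool)) pmf" where
  "bit_pairs r d = pmf_of_set (bitstrings r d \<times> bitstrings r d)"

end

theory Submission
  imports Defs
begin

lemma om_add: "omega_pow d (a + b) = omega_pow d a * omega_pow d b"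
  unfolding omega_pow_def cis_mult by (simp add: add_divide_distrib distrib_left)

lemma om_cnj: "cnj (omega_pow d a) = omega_pow d (- a)"
  unfolding omega_pow_def cis_cnj by simp

lemma om_norm[simp]: "cmod (omega_pow d a) = 1"
  unfolding omega_pow_def by simp

lemma om_0[simp]: "omega_pow d 0 = 1"
  unfolding omega_pow_def by simp

lemma om_mult_cnj[simp]: "omega_pow d a * cnj (omega_pow d a) = 1"
  by (metis complex_norm_square om_norm of_real_1 power_one)

lemma om_dvd: assumes "d > 0" "int d dvd a" shows "omega_pow d a = 1"
proof -
  obtain q where q: "a = int d * q" using assms(2) by blast
  have "2 * pi * of_int a / real d = 2 * pi * of_int q" using assms(1) q by simp
  thus ?thesis unfolding omega_pow_def by simp
qed

lemma om_cong: assumes "d > 0" "int d dvd (a - b)" shows "omega_pow d a = omega_pow d b"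
proof -
  have "omega_pow d a = omega_pow d (a - b) * omega_pow d b" by (simp flip: om_add)
  thus ?thesis using om_dvd[OF assms] by simp
qed

lemma om_ne1: assumes "d > 0" "\<not> int d dvd a" shows "omega_pow d a \<noteq> 1"
proof
  assume "omega_pow d a = 1"
  hence "exp (\<i> * complex_of_real (2 * pi * of_int a / real d)) = 1"
    unfolding omega_pow_def cis_conv_exp by simp
  then obtain n :: int where n: "2 * pi * of_int a / real d = of_int (2 * n) * pi"
    unfolding exp_eq_1 by auto
  hence "of_int a = real d * of_int n" using assms(1) pi_gt_zero
    by (simp add: field_simps)
  hence "a = int d * n" by (metis of_int_eq_iff of_int_mult of_int_of_nat_eq)
  thus False using assms(2) by simp
qed

lemma om_pow: "omega_pow d a ^ n = omega_pow d (a * int n)"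
  unfolding omega_pow_def Complex.DeMoivre by (simp add: field_simps)

lemma om_sum: assumes "d > 0"
  shows "(\<Sum>l<d. omega_pow d (a * int l)) = (if int d dvd a then of_nat d else 0)"
proof (cases "int d dvd a")
  case True
  hence "\<And>l. omega_pow d (a * int l) = 1" using assms om_dvd by auto
  thus ?thesis using True by simp
next
  case False
  have z: "omega_pow d a \<noteq> 1" using om_ne1[OF assms False] .
  have "(\<Sum>l<d. omega_pow d (a * int l)) = (\<Sum>l<d. omega_pow d a ^ l)" by (simp add: om_pow)
  also have "\<dots> = (omega_pow d a ^ d - 1) / (omega_pow d a - 1)" using geometric_sum[OF z] .
  also have "omega_pow d a ^ d = 1" unfolding om_pow using om_dvd[OF assms] by simp
  finally show ?thesis using False by simp
qed

definition Pex :: "nat \<Rightarrow> nat \<Rightarrow> nat \<Rightarrow> int" where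
  "Pex j k l = - int k * int l + int j * int l ^ 2 + int k ^ 2"

lemma phi_alt: "phi d j k l = complex_of_real (1 / sqrt (real d)) * omega_pow d (Pex j k l)"
  unfolding phi_def Pex_def ..

lemma cnj_phi_mult: assumes "d > 0"
  shows "cnj (phi d j k l) * phi d j' k' l' = (1 / of_nat d) * omega_pow d (Pex j' k' l' - Pex j k l)"
proof -
  have r: "1 / sqrt (real d) * (1 / sqrt (real d)) = 1 / real d" using assms
    by (simp add: real_sqrt_mult[symmetric])
  have c: "complex_of_real (1 / sqrt (real d)) * complex_of_real (1 / sqrt (real d)) = 1 / of_nat d"
    unfolding of_real_mult[symmetric] r by simp
  have "cnj (phi d j k l) * phi d j' k' l' =
      (complex_of_real (1 / sqrt (real d)) * complex_of_real (1 / sqrt (real d))) * (omega_pow d (- Pex j k l) * omega_pow d (Pex j' k' l'))"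
    unfolding phi_alt by (simp add: om_cnj mult_ac)
  also have "\<dots> = (1 / of_nat d) * omega_pow d (Pex j' k' l' - Pex j k l)"
    unfolding c om_add[symmetric] by simp
  finally show ?thesis .
qed

lemma nat_dvd_diff_eq: assumes "k < d" "k' < d" "int d dvd (int k - int k')" shows "k = k'"
proof -
  obtain q where q: "int k - int k' = int d * q" using assms(3) by blast
  have "q = 0"
  proof (rule ccontr)
    assume "q \<noteq> 0"
    hence "\<bar>q\<bar> \<ge> 1" by linarith
    hence "int d * 1 \<le> int d * \<bar>q\<bar>" by (intro mult_left_mono) auto
    hence "\<bar>int d * q\<bar> \<ge> int d" by (simp add: abs_mult)
    thus False using q assms(1,2) by linarith
  qed
  thus ?thesis using q by simp
qed

lemma alpha_diag: assumes "d > 0" "k < d" "k' < d"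
  shows "alpha d j j k k' = (if k = k' then 1 else 0)"
proof -
  have "alpha d j j k k' = (\<Sum>l<d. (1 / of_nat d) * (omega_pow d (int k' ^ 2 - int k ^ 2) * omega_pow d ((int k - int k') * int l)))"
    unfolding alpha_def
    by (intro sum.cong refl, unfold cnj_phi_mult[OF assms(1)] om_add[symmetric],
        rule arg_cong[where f = "\<lambda>x. _ * omega_pow d x"], simp add: Pex_def algebra_simps power2_eq_square)
  also have "\<dots> = (1 / of_nat d) * omega_pow d (int k' ^ 2 - int k ^ 2) * (\<Sum>l<d. omega_pow d ((int k - int k') * int l))"
    by (simp add: sum_distrib_left mult.assoc)
  also have "\<dots> = (if k = k' then 1 else 0)"
    unfolding om_sum[OF assms(1)] using nat_dvd_diff_eq[OF assms(2,3)] assms(1) by auto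
  finally show ?thesis .
qed

lemma S_diag: assumes "d > 0" shows "S_sum d j j = of_nat d"
proof -
  have "S_sum d j j = (\<Sum>k<d. \<Sum>k'<d. if k = k' then 1 else 0)"
    unfolding S_sum_def by (intro sum.cong refl, simp add: alpha_diag[OF assms])
  also have "\<dots> = of_nat d" by simp
  finally show ?thesis .
qed

lemma A_diag: assumes "d > 0" "k < d" shows "A_entry d j j k k = real d"
  unfolding A_entry_def using alpha_diag[OF assms(1,2,2)] S_diag[OF assms(1)] by simp

lemma phi_rows: assumes "d > 0" "l < d" "l' < d"
  shows "(\<Sum>k<d. cnj (phi d j k l') * phi d j k l) = (if l = l' then 1 else 0)"
proof -
  have "(\<Sum>k<d. cnj (phi d j k l') * phi d j k l) = (\<Sum>k<d. (1 / of_nat d) * (omega_pow d (int j * int l ^ 2 - int j * int l' ^ 2) * omega_pow d ((int l' - int l) * int k)))"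
    by (intro sum.cong refl, unfold cnj_phi_mult[OF assms(1)] om_add[symmetric],
        rule arg_cong[where f = "\<lambda>x. _ * omega_pow d x"], simp add: Pex_def algebra_simps power2_eq_square)
  also have "\<dots> = (1 / of_nat d) * omega_pow d (int j * int l ^ 2 - int j * int l' ^ 2) * (\<Sum>k<d. omega_pow d ((int l' - int l) * int k))"
    by (simp add: sum_distrib_left mult.assoc)
  also have "\<dots> = (if l = l' then 1 else 0)"
    unfolding om_sum[OF assms(1)] using nat_dvd_diff_eq[OF assms(3,2)] assms(1) by auto
  finally show ?thesis .
qed

lemma shift_sum:
  fixes f :: "int \<Rightarrow> complex"
  assumes d: "d > 0" and per: "\<And>x. f x = f (x mod int d)"
  shows "(\<Sum>t<d. f (int t + c)) = (\<Sum>k<d. f (int k))"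
proof -
  define g where "g t = nat ((int t + c) mod int d)" for t
  have gl: "g t < d" for t unfolding g_def using d
    by (simp add: nat_less_iff)
  have inj: "inj_on g {..<d}"
  proof
    fix x y assume x: "x \<in> {..<d}" and y: "y \<in> {..<d}" and e: "g x = g y"
    have "(int x + c) mod int d = (int y + c) mod int d" using e d unfolding g_def
      by (metis eq_nat_nat_iff of_nat_0_less_iff pos_mod_sign)
    hence "int x mod int d = int y mod int d" by (metis mod_diff_left_eq add_diff_cancel_right')
    thus "x = y" using x y by simp
  qed
  have im: "g ` {..<d} = {..<d}" by (rule endo_inj_surj) (use gl inj in auto)
  have bij: "bij_betw g {..<d} {..<d}" using inj im by (simp add: bij_betw_def)
  have "(\<Sum>t<d. f (int t + c)) = (\<Sum>t<d. f (int (g t)))"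
    by (intro sum.cong refl) (simp add: g_def per[of "int _ + c"] d)
  also have "\<dots> = (\<Sum>k<d. f (int k))" using sum.reindex_bij_betw[OF bij, of "\<lambda>k. f (int k)"] .
  finally show ?thesis .
qed

definition gs :: "nat \<Rightarrow> nat \<Rightarrow> complex" where
  "gs d m = (\<Sum>k<d. omega_pow d (int k ^ 2 - int k * int m))"

lemma two_t_dvd: assumes "prime d" "odd d" "t < d" "int d dvd 2 * int t" shows "t = 0"
proof -
  have "d dvd 2 * t" using assms(4) by (metis int_dvd_int_iff of_nat_mult of_nat_numeral)
  hence "d dvd 2 \<or> d dvd t" using assms(1) prime_dvd_mult_iff by blast
  moreover have "\<not> d dvd 2"
  proof
    assume "d dvd 2" hence "d \<le> 2" by (simp add: dvd_imp_le)
    thus False using assms(1,2) prime_ge_2_nat[of d] by (cases "d = 2") auto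
  qed
  ultimately have "d dvd t" by blast
  thus "t = 0" using assms(3) by (metis dvd_imp_le not_le neq0_conv)
qed

lemma gs_norm: assumes "prime d" "odd d"
  shows "gs d m * cnj (gs d m) = of_nat d"
proof -
  have d: "d > 0" using assms(1) prime_gt_0_nat by blast
  define f where "f k' x = omega_pow d (x ^ 2 - x * int m - (int k' ^ 2 - int k' * int m))" for k' x
  have per: "f k' x = f k' (x mod int d)" for k' x
    unfolding f_def
  proof (rule om_cong[OF d])
    have "x - x mod int d = int d * (x div int d)" by (simp add: minus_mod_eq_mult_div)
    moreover have "(x ^ 2 - x * int m - (int k' ^ 2 - int k' * int m)) -
       ((x mod int d) ^ 2 - (x mod int d) * int m - (int k' ^ 2 - int k' * int m))
       = (x - x mod int d) * (x + x mod int d - int m)"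
      by (simp add: algebra_simps power2_eq_square)
    ultimately show "int d dvd (x ^ 2 - x * int m - (int k' ^ 2 - int k' * int m)) -
       ((x mod int d) ^ 2 - (x mod int d) * int m - (int k' ^ 2 - int k' * int m))"
      by simp
  qed
  have "gs d m * cnj (gs d m) = (\<Sum>k'<d. \<Sum>k<d. f k' (int k))"
    unfolding gs_def f_def sum_distrib_left sum_distrib_right cnj_sum
    by (intro sum.cong refl, simp add: om_cnj om_add[symmetric], rule arg_cong[where f = "omega_pow d"], simp)
  also have "\<dots> = (\<Sum>k'<d. \<Sum>t<d. f k' (int t + int k'))"
    by (intro sum.cong refl shift_sum[symmetric] d per)
  also have "\<dots> = (\<Sum>k'<d. \<Sum>t<d. omega_pow d (int t ^ 2 - int t * int m) * omega_pow d ((2 * int t) * int k'))"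
    unfolding f_def om_add[symmetric]
    by (intro sum.cong refl arg_cong[where f = "omega_pow d"]) (simp add: algebra_simps power2_eq_square)
  also have "\<dots> = (\<Sum>t<d. omega_pow d (int t ^ 2 - int t * int m) * (\<Sum>k'<d. omega_pow d ((2 * int t) * int k')))"
    by (subst sum.swap) (simp add: sum_distrib_left)
  also have "\<dots> = (\<Sum>t<d. if t = 0 then of_nat d else 0)"
    unfolding om_sum[OF d]
    by (intro sum.cong refl) (use two_t_dvd[OF assms] in auto)
  also have "\<dots> = of_nat d" using d by simp
  finally show ?thesis .
qed

lemma gs_cmod: assumes "prime d" "odd d" shows "cmod (gs d m) ^ 2 = real d"
  using gs_norm[OF assms, of m] complex_norm_square[of "gs d m"]
  by (metis of_real_eq_iff of_real_of_nat_eq)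

lemma sq_char: assumes "prime d" "odd d" "m < d" "m' < d"
  shows "int d dvd (int m ^ 2 - int m' ^ 2) \<longleftrightarrow> (m' = m \<or> (m \<noteq> 0 \<and> m' = d - m))"
proof
  assume h: "int d dvd (int m ^ 2 - int m' ^ 2)"
  have pr: "prime (int d)" using assms(1) by simp
  have "int m ^ 2 - int m' ^ 2 = (int m - int m') * (int m + int m')" by (simp add: algebra_simps power2_eq_square)
  hence "int d dvd (int m - int m') \<or> int d dvd (int m + int m')" using h pr prime_dvd_mult_iff by metis
  thus "m' = m \<or> (m \<noteq> 0 \<and> m' = d - m)"
  proof
    assume "int d dvd (int m - int m')" thus ?thesis using nat_dvd_diff_eq[OF assms(3,4)] by auto
  next
    assume "int d dvd (int m + int m')"
    then obtain q where q: "int m + int m' = int d * q" by blast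
    have d0: "d > 0" using assms(3) by simp
    have "int d * q \<ge> 0" using q by simp
    hence "q \<ge> 0" using d0 by (simp add: zero_le_mult_iff)
    moreover have "int d * q < int d * 2" using q assms(3,4) by linarith
    hence "q < 2" using d0 mult_less_cancel_left_pos[of "int d" q 2] by simp
    ultimately have "q = 0 \<or> q = 1" by auto
    thus ?thesis using q assms(4) by auto
  qed
next
  assume "m' = m \<or> (m \<noteq> 0 \<and> m' = d - m)"
  thus "int d dvd (int m ^ 2 - int m' ^ 2)"
  proof
    assume "m \<noteq> 0 \<and> m' = d - m"
    hence e: "int m' = int d - int m" using assms(3) by simp
    have "int m ^ 2 - (int d - int m) ^ 2 = int d * (2 * int m - int d)" by (simp add: algebra_simps power2_eq_square)
    thus ?thesis unfolding e by simp
  qed simp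
qed

lemma sum_reflect: "(\<Sum>m\<in>{1..<d::nat}. f (d - m)) = (\<Sum>m\<in>{1..<d}. f m)"
  by (rule sum.reindex_bij_witness[where i = "\<lambda>m. d - m" and j = "\<lambda>m. d - m"]) auto

lemma sum_if_nz: "(\<Sum>m<(d::nat). if m \<noteq> 0 then f m else 0) = (\<Sum>m\<in>{1..<d}. f m)"
proof -
  have "(\<Sum>m<d. if m \<noteq> 0 then f m else 0) = (\<Sum>m\<in>{..<d} \<inter> {m. m \<noteq> 0}. f m)"
    by (subst sum.inter_restrict) auto
  also have "{..<d} \<inter> {m. m \<noteq> 0} = {1..<d}" by auto
  finally show ?thesis .
qed

lemma key_K:
  fixes x :: "nat \<Rightarrow> complex"
  assumes "prime d" "odd d"
  shows "(\<Sum>j<d. cmod (\<Sum>m<d. omega_pow d (int j * int m ^ 2) * x m) ^ 2) \<le> 2 * real d * (\<Sum>m<d. cmod (x m) ^ 2)"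
proof -
  have d: "d > 0" using assms(1) prime_gt_0_nat by blast
  define R where "R = (\<Sum>m\<in>{1..<d}. x m * cnj (x (d - m)))"
  have tm: "(omega_pow d a * y) * cnj (omega_pow d b * z) = y * cnj z * omega_pow d (a - b)" for a b y z
  proof -
    have "omega_pow d (a - b) = omega_pow d a * omega_pow d (- b)" using om_add[of d a "- b"] by simp
    thus ?thesis by (simp add: om_cnj)
  qed
  have "complex_of_real (\<Sum>j<d. cmod (\<Sum>m<d. omega_pow d (int j * int m ^ 2) * x m) ^ 2)
     = (\<Sum>j<d. (\<Sum>m<d. omega_pow d (int j * int m ^ 2) * x m) * cnj (\<Sum>m<d. omega_pow d (int j * int m ^ 2) * x m))"
    unfolding of_real_sum complex_norm_square ..
  also have "\<dots> = (\<Sum>j<d. \<Sum>m<d. \<Sum>m'<d. (omega_pow d (int j * int m ^ 2) * x m) * cnj (omega_pow d (int j * int m' ^ 2) * x m'))"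
    unfolding cnj_sum sum_product ..
  also have "\<dots> = (\<Sum>j<d. \<Sum>m<d. \<Sum>m'<d. x m * cnj (x m') * omega_pow d ((int m ^ 2 - int m' ^ 2) * int j))"
    unfolding tm by (intro sum.cong refl arg_cong[where f = "\<lambda>u. _ * omega_pow d u"]) (simp add: algebra_simps)
  also have "\<dots> = (\<Sum>m<d. \<Sum>m'<d. x m * cnj (x m') * (\<Sum>j<d. omega_pow d ((int m ^ 2 - int m' ^ 2) * int j)))"
    unfolding sum_distrib_left
    by (subst sum.swap, rule sum.cong[OF refl], subst sum.swap, rule refl)
  also have "\<dots> = (\<Sum>m<d. \<Sum>m'<d. of_nat d * ((if m' = m then x m * cnj (x m') else 0) +
                      (if m \<noteq> 0 \<and> m' = d - m then x m * cnj (x m') else 0)))"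
  proof (intro sum.cong refl)
    fix m m' assume m: "m \<in> {..<d}" and m': "m' \<in> {..<d}"
    have nd: "\<not> (m' = m \<and> m \<noteq> 0 \<and> m' = d - m)"
    proof
      assume h: "m' = m \<and> m \<noteq> 0 \<and> m' = d - m"
      hence "d = 2 * m" using m by auto
      thus False using assms(2) by simp
    qed
    have mlt: "m < d" and m'lt: "m' < d" using m m' by auto
    thus "x m * cnj (x m') * (\<Sum>j<d. omega_pow d ((int m ^ 2 - int m' ^ 2) * int j)) =
      of_nat d * ((if m' = m then x m * cnj (x m') else 0) + (if m \<noteq> 0 \<and> m' = d - m then x m * cnj (x m') else 0))"
      unfolding om_sum[OF d] sq_char[OF assms(1,2) mlt m'lt] using nd by auto
  qed
  also have "\<dots> = of_nat d * ((\<Sum>m<d. x m * cnj (x m)) + R)"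
  proof -
    have "(\<Sum>m<d. \<Sum>m'<d. of_nat d * ((if m' = m then x m * cnj (x m') else 0) +
                      (if m \<noteq> 0 \<and> m' = d - m then x m * cnj (x m') else 0)))
       = of_nat d * (\<Sum>m<d. x m * cnj (x m) + (if m \<noteq> 0 then x m * cnj (x (d - m)) else 0))"
    proof -
      have pt: "(\<Sum>m'<d. of_nat d * ((if m' = m then x m * cnj (x m') else 0) +
                      (if m \<noteq> 0 \<and> m' = d - m then x m * cnj (x m') else 0)))
           = of_nat d * (x m * cnj (x m) + (if m \<noteq> 0 then x m * cnj (x (d - m)) else 0))" if m: "m < d" for m
      proof -
        have "(\<Sum>m'<d. if m \<noteq> 0 \<and> m' = d - m then x m * cnj (x m') else 0) = (if m \<noteq> 0 then x m * cnj (x (d - m)) else 0)"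
          using m by (cases "m = 0") (auto simp: sum.delta'[of "{..<d}", simplified])
        moreover have "(\<Sum>m'<d. if m' = m then x m * cnj (x m') else 0) = x m * cnj (x m)" using m by simp
        ultimately show ?thesis by (simp add: sum_distrib_left[symmetric] sum.distrib)
      qed
      have "(\<Sum>m<d. \<Sum>m'<d. of_nat d * ((if m' = m then x m * cnj (x m') else 0) +
                      (if m \<noteq> 0 \<and> m' = d - m then x m * cnj (x m') else 0)))
        = (\<Sum>m<d. of_nat d * (x m * cnj (x m) + (if m \<noteq> 0 then x m * cnj (x (d - m)) else 0)))"
        by (rule sum.cong[OF refl], rule pt, simp)
      thus ?thesis by (simp only: sum_distrib_left)
    qed
    also have "\<dots> = of_nat d * ((\<Sum>m<d. x m * cnj (x m)) + R)"
      unfolding sum.distrib R_def sum_if_nz ..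
    finally show ?thesis .
  qed
  finally have eq: "complex_of_real (\<Sum>j<d. cmod (\<Sum>m<d. omega_pow d (int j * int m ^ 2) * x m) ^ 2)
      = of_nat d * ((\<Sum>m<d. x m * cnj (x m)) + R)" .
  have "(\<Sum>j<d. cmod (\<Sum>m<d. omega_pow d (int j * int m ^ 2) * x m) ^ 2) = real d * ((\<Sum>m<d. cmod (x m) ^ 2) + Re R)"
    using arg_cong[OF eq, of Re] by (simp add: complex_norm_square[symmetric] flip: of_real_sum)
  moreover have "Re R \<le> (\<Sum>m<d. cmod (x m) ^ 2)"
  proof -
    have "Re R = (\<Sum>m\<in>{1..<d}. Re (x m * cnj (x (d - m))))" unfolding R_def by simp
    also have "\<dots> \<le> (\<Sum>m\<in>{1..<d}. (cmod (x m) ^ 2 + cmod (x (d - m)) ^ 2) / 2)"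
    proof (rule sum_mono)
      fix m
      have "Re (x m * cnj (x (d - m))) \<le> cmod (x m) * cmod (x (d - m))"
        by (metis complex_Re_le_cmod complex_mod_cnj norm_mult)
      also have "\<dots> \<le> (cmod (x m) ^ 2 + cmod (x (d - m)) ^ 2) / 2"
        using sum_squares_bound[of "cmod (x m)" "cmod (x (d - m))"] by (simp add: power2_eq_square)
      finally show "Re (x m * cnj (x (d - m))) \<le> (cmod (x m) ^ 2 + cmod (x (d - m)) ^ 2) / 2" .
    qed
    also have "\<dots> = (\<Sum>m\<in>{1..<d}. cmod (x m) ^ 2)"
      unfolding sum_divide_distrib[symmetric] sum.distrib sum_reflect[of "\<lambda>m. cmod (x m) ^ 2"] by simp
    also have "\<dots> \<le> (\<Sum>m<d. cmod (x m) ^ 2)" by (rule sum_mono2) auto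
    finally show ?thesis .
  qed
  moreover have "real d * Re R \<le> real d * (\<Sum>m<d. cmod (x m) ^ 2)"
    using calculation(2) by (intro mult_left_mono) auto
  ultimately show ?thesis by (simp add: algebra_simps)
qed

definition v :: "nat \<Rightarrow> nat \<Rightarrow> nat \<Rightarrow> complex" where
  "v d j m = (\<Sum>k<d. phi d j k m)"

definition w :: "nat \<Rightarrow> nat \<Rightarrow> nat \<Rightarrow> nat \<Rightarrow> nat \<Rightarrow> complex" where
  "w d j k l m = phi d j k l * cnj (v d j m)"

lemma v_alt: "v d j m = complex_of_real (1 / sqrt (real d)) * omega_pow d (int j * int m ^ 2) * gs d m"
proof -
  have "v d j m = (\<Sum>k<d. complex_of_real (1 / sqrt (real d)) * omega_pow d (int j * int m ^ 2) * omega_pow d (int k ^ 2 - int k * int m))"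
    unfolding v_def phi_alt mult.assoc om_add[symmetric]
    by (intro sum.cong refl arg_cong[where f = "\<lambda>u. _ * omega_pow d u"]) (simp add: Pex_def algebra_simps)
  thus ?thesis unfolding gs_def by (simp add: sum_distrib_left)
qed

lemma v_bound:
  fixes x :: "nat \<Rightarrow> complex"
  assumes "prime d" "odd d" "r \<le> d"
  shows "(\<Sum>j<r. cmod (\<Sum>m<d. v d j m * x m) ^ 2) \<le> 2 * real d * (\<Sum>m<d. cmod (x m) ^ 2)"
proof -
  have d: "d > 0" using assms(1) prime_gt_0_nat by blast
  define x' where "x' m = complex_of_real (1 / sqrt (real d)) * gs d m * x m" for m
  have x'n: "cmod (x' m) ^ 2 = cmod (x m) ^ 2" for m
  proof -
    have "cmod (x' m) ^ 2 = (1 / sqrt (real d)) ^ 2 * cmod (gs d m) ^ 2 * cmod (x m) ^ 2"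
      unfolding x'_def norm_mult power_mult_distrib by (simp add: norm_divide)
    also have "\<dots> = cmod (x m) ^ 2" using gs_cmod[OF assms(1,2)] d by (simp add: power_divide)
    finally show ?thesis .
  qed
  have "(\<Sum>j<r. cmod (\<Sum>m<d. v d j m * x m) ^ 2) = (\<Sum>j<r. cmod (\<Sum>m<d. omega_pow d (int j * int m ^ 2) * x' m) ^ 2)"
    unfolding v_alt x'_def by (simp add: mult_ac)
  also have "\<dots> \<le> (\<Sum>j<d. cmod (\<Sum>m<d. omega_pow d (int j * int m ^ 2) * x' m) ^ 2)"
    by (rule sum_mono2) (use assms(3) in auto)
  also have "\<dots> \<le> 2 * real d * (\<Sum>m<d. cmod (x' m) ^ 2)" by (rule key_K[OF assms(1,2)])
  finally show ?thesis unfolding x'n .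
qed

lemma unitary_rows:
  fixes x :: "nat \<Rightarrow> complex"
  assumes "d > 0"
  shows "(\<Sum>k<d. cmod (\<Sum>l<d. cnj (phi d j k l) * x l) ^ 2) = (\<Sum>l<d. cmod (x l) ^ 2)"
proof -
  have "complex_of_real (\<Sum>k<d. cmod (\<Sum>l<d. cnj (phi d j k l) * x l) ^ 2)
     = (\<Sum>k<d. \<Sum>l<d. \<Sum>l'<d. (cnj (phi d j k l) * x l) * cnj (cnj (phi d j k l') * x l'))"
    unfolding of_real_sum complex_norm_square cnj_sum sum_product ..
  also have "\<dots> = (\<Sum>l<d. \<Sum>l'<d. x l * cnj (x l') * (\<Sum>k<d. cnj (phi d j k l) * phi d j k l'))"
    unfolding sum_distrib_left
    by (subst sum.swap, rule sum.cong[OF refl], subst sum.swap, intro sum.cong refl) (simp add: mult_ac)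
  also have "\<dots> = (\<Sum>l<d. \<Sum>l'<d. if l' = l then x l * cnj (x l') else 0)"
    by (intro sum.cong refl) (simp add: phi_rows[OF assms])
  also have "\<dots> = complex_of_real (\<Sum>l<d. cmod (x l) ^ 2)"
    unfolding of_real_sum complex_norm_square by simp
  finally show ?thesis using of_real_eq_iff by blast
qed

lemma S_fact: "S_sum d j j' = (\<Sum>m<d. cnj (v d j m) * v d j' m)"
proof -
  have "S_sum d j j' = (\<Sum>k<d. \<Sum>l<d. \<Sum>k'<d. cnj (phi d j k l) * phi d j' k' l)"
    unfolding S_sum_def alpha_def by (rule sum.cong[OF refl], rule sum.swap)
  also have "\<dots> = (\<Sum>l<d. \<Sum>k<d. \<Sum>k'<d. cnj (phi d j k l) * phi d j' k' l)" by (rule sum.swap)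
  also have "\<dots> = (\<Sum>m<d. cnj (v d j m) * v d j' m)"
    unfolding v_def cnj_sum sum_product ..
  finally show ?thesis .
qed

lemma B_fact: "alpha d j j' k k' * cnj (S_sum d j j') = (\<Sum>l<d. \<Sum>m<d. cnj (w d j k l m) * w d j' k' l m)"
  unfolding S_fact alpha_def w_def cnj_sum sum_product
  by (intro sum.cong refl) (simp add: mult_ac)

lemma swap4: "(\<Sum>a\<in>A. \<Sum>b\<in>B. \<Sum>c\<in>C. \<Sum>e\<in>E. f a b c e) = (\<Sum>c\<in>C. \<Sum>e\<in>E. \<Sum>a\<in>A. \<Sum>b\<in>B. f a b c e)"
proof -
  have "(\<Sum>a\<in>A. \<Sum>b\<in>B. \<Sum>c\<in>C. \<Sum>e\<in>E. f a b c e) = (\<Sum>a\<in>A. \<Sum>c\<in>C. \<Sum>b\<in>B. \<Sum>e\<in>E. f a b c e)"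
    by (rule sum.cong[OF refl], rule sum.swap)
  also have "\<dots> = (\<Sum>a\<in>A. \<Sum>c\<in>C. \<Sum>e\<in>E. \<Sum>b\<in>B. f a b c e)"
    by (rule sum.cong[OF refl], rule sum.cong[OF refl], rule sum.swap)
  also have "\<dots> = (\<Sum>c\<in>C. \<Sum>a\<in>A. \<Sum>e\<in>E. \<Sum>b\<in>B. f a b c e)" by (rule sum.swap)
  also have "\<dots> = (\<Sum>c\<in>C. \<Sum>e\<in>E. \<Sum>a\<in>A. \<Sum>b\<in>B. f a b c e)"
    by (rule sum.cong[OF refl], rule sum.swap)
  finally show ?thesis .
qed

definition Az :: "nat \<Rightarrow> nat \<Rightarrow> (nat \<times> nat \<Rightarrow> real) \<Rightarrow> nat \<Rightarrow> nat \<Rightarrow> real" where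
  "Az d r z j k = (\<Sum>j'<r. \<Sum>k'<d. A_entry d j j' k k' * z (j', k'))"

definition yv :: "nat \<Rightarrow> nat \<Rightarrow> (nat \<times> nat \<Rightarrow> real) \<Rightarrow> nat \<Rightarrow> nat \<Rightarrow> complex" where
  "yv d r z l m = (\<Sum>j<r. \<Sum>k<d. complex_of_real (z (j, k)) * w d j k l m)"

lemma L1: "Az d r z j k = Re (\<Sum>l<d. \<Sum>m<d. cnj (w d j k l m) * yv d r z l m)"
proof -
  have "Az d r z j k = Re (\<Sum>j'<r. \<Sum>k'<d. complex_of_real (z (j', k')) * (\<Sum>l<d. \<Sum>m<d. cnj (w d j k l m) * w d j' k' l m))"
    unfolding Az_def A_entry_def B_fact by (simp add: mult.commute)
  also have "(\<Sum>j'<r. \<Sum>k'<d. complex_of_real (z (j', k')) * (\<Sum>l<d. \<Sum>m<d. cnj (w d j k l m) * w d j' k' l m))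
     = (\<Sum>j'<r. \<Sum>k'<d. \<Sum>l<d. \<Sum>m<d. cnj (w d j k l m) * (complex_of_real (z (j', k')) * w d j' k' l m))"
    unfolding sum_distrib_left by (simp add: mult_ac)
  also have "\<dots> = (\<Sum>l<d. \<Sum>m<d. \<Sum>j'<r. \<Sum>k'<d. cnj (w d j k l m) * (complex_of_real (z (j', k')) * w d j' k' l m))"
    by (rule swap4)
  also have "\<dots> = (\<Sum>l<d. \<Sum>m<d. cnj (w d j k l m) * yv d r z l m)"
    unfolding yv_def sum_distrib_left ..
  finally show ?thesis .
qed

lemma L3: "(\<Sum>l<d. \<Sum>m<d. cmod (yv d r z l m) ^ 2) = (\<Sum>j<r. \<Sum>k<d. z (j, k) * Az d r z j k)"
proof -
  have "complex_of_real (\<Sum>l<d. \<Sum>m<d. cmod (yv d r z l m) ^ 2) = (\<Sum>l<d. \<Sum>m<d. yv d r z l m * cnj (yv d r z l m))"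
    unfolding of_real_sum complex_norm_square ..
  also have "\<dots> = (\<Sum>l<d. \<Sum>m<d. \<Sum>j<r. \<Sum>k<d. complex_of_real (z (j, k)) * (w d j k l m * cnj (yv d r z l m)))"
    unfolding yv_def[of d r z] sum_distrib_right by (simp add: mult_ac)
  also have "\<dots> = (\<Sum>j<r. \<Sum>k<d. \<Sum>l<d. \<Sum>m<d. complex_of_real (z (j, k)) * (w d j k l m * cnj (yv d r z l m)))"
    by (rule swap4)
  also have "\<dots> = (\<Sum>j<r. \<Sum>k<d. complex_of_real (z (j, k)) * cnj (\<Sum>l<d. \<Sum>m<d. cnj (w d j k l m) * yv d r z l m))"
    unfolding sum_distrib_left cnj_sum by simp
  finally have "complex_of_real (\<Sum>l<d. \<Sum>m<d. cmod (yv d r z l m) ^ 2) =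
      (\<Sum>j<r. \<Sum>k<d. complex_of_real (z (j, k)) * cnj (\<Sum>l<d. \<Sum>m<d. cnj (w d j k l m) * yv d r z l m))" .
  from arg_cong[OF this, of Re] show ?thesis
    unfolding L1 by (simp add: Re_sum)
qed

lemma L2:
  fixes y :: "nat \<Rightarrow> nat \<Rightarrow> complex"
  assumes "prime d" "odd d" "r \<le> d"
  shows "(\<Sum>j<r. \<Sum>k<d. cmod (\<Sum>l<d. \<Sum>m<d. cnj (w d j k l m) * y l m) ^ 2) \<le> 2 * real d * (\<Sum>l<d. \<Sum>m<d. cmod (y l m) ^ 2)"
proof -
  have d: "d > 0" using assms(1) prime_gt_0_nat by blast
  have "(\<Sum>j<r. \<Sum>k<d. cmod (\<Sum>l<d. \<Sum>m<d. cnj (w d j k l m) * y l m) ^ 2)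
      = (\<Sum>j<r. \<Sum>k<d. cmod (\<Sum>l<d. cnj (phi d j k l) * (\<Sum>m<d. v d j m * y l m)) ^ 2)"
    unfolding w_def sum_distrib_left by (simp add: mult_ac)
  also have "\<dots> = (\<Sum>j<r. \<Sum>l<d. cmod (\<Sum>m<d. v d j m * y l m) ^ 2)"
    by (intro sum.cong refl unitary_rows d)
  also have "\<dots> = (\<Sum>l<d. \<Sum>j<r. cmod (\<Sum>m<d. v d j m * y l m) ^ 2)" by (rule sum.swap)
  also have "\<dots> \<le> (\<Sum>l<d. 2 * real d * (\<Sum>m<d. cmod (y l m) ^ 2))"
    by (intro sum_mono v_bound assms)
  also have "\<dots> = 2 * real d * (\<Sum>l<d. \<Sum>m<d. cmod (y l m) ^ 2)" by (simp add: sum_distrib_left)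
  finally show ?thesis .
qed

lemma A_norm:
  assumes "prime d" "odd d" "r \<le> d"
  shows "(\<Sum>j<r. \<Sum>k<d. (Az d r z j k) ^ 2) \<le> 4 * real d ^ 2 * (\<Sum>j<r. \<Sum>k<d. (z (j, k)) ^ 2)"
proof -
  have d: "real d > 0" using assms(1) prime_gt_0_nat by simp
  define Sa where "Sa = (\<Sum>j<r. \<Sum>k<d. (Az d r z j k) ^ 2)"
  define Sz where "Sz = (\<Sum>j<r. \<Sum>k<d. (z (j, k)) ^ 2)"
  have "Sa \<le> (\<Sum>j<r. \<Sum>k<d. cmod (\<Sum>l<d. \<Sum>m<d. cnj (w d j k l m) * yv d r z l m) ^ 2)"
    unfolding Sa_def L1
  proof (intro sum_mono)
    fix j k
    show "(Re (\<Sum>l<d. \<Sum>m<d. cnj (w d j k l m) * yv d r z l m))\<^sup>2 \<le> (cmod (\<Sum>l<d. \<Sum>m<d. cnj (w d j k l m) * yv d r z l m))\<^sup>2"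
    proof -
      have "\<bar>Re (\<Sum>l<d. \<Sum>m<d. cnj (w d j k l m) * yv d r z l m)\<bar> \<le> cmod (\<Sum>l<d. \<Sum>m<d. cnj (w d j k l m) * yv d r z l m)"
        by (rule abs_Re_le_cmod)
      from power_mono[OF this abs_ge_zero, of 2] show ?thesis by simp
    qed
  qed
  also have "\<dots> \<le> 2 * real d * (\<Sum>l<d. \<Sum>m<d. cmod (yv d r z l m) ^ 2)" by (rule L2[OF assms])
  also have "\<dots> = 2 * real d * (\<Sum>j<r. \<Sum>k<d. z (j, k) * Az d r z j k)" unfolding L3 ..
  also have "\<dots> \<le> 2 * real d * (\<Sum>j<r. \<Sum>k<d. (Az d r z j k) ^ 2 / (4 * real d) + real d * z (j, k) ^ 2)"
  proof (intro mult_left_mono sum_mono)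
    fix j k
    have "0 \<le> (Az d r z j k - 2 * real d * z (j, k)) ^ 2" by simp
    hence "4 * real d * (z (j, k) * Az d r z j k) \<le> (Az d r z j k) ^ 2 + 4 * real d ^ 2 * z (j, k) ^ 2"
      by (simp add: power2_eq_square algebra_simps)
    hence "(4 * real d * (z (j, k) * Az d r z j k)) / (4 * real d) \<le> ((Az d r z j k) ^ 2 + 4 * real d ^ 2 * z (j, k) ^ 2) / (4 * real d)"
      using d by (intro divide_right_mono) auto
    also have "(4 * real d * (z (j, k) * Az d r z j k)) / (4 * real d) = z (j, k) * Az d r z j k" using d by simp
    also have "((Az d r z j k) ^ 2 + 4 * real d ^ 2 * z (j, k) ^ 2) / (4 * real d) = (Az d r z j k) ^ 2 / (4 * real d) + real d * z (j, k) ^ 2"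
      using d by (simp add: add_divide_distrib power2_eq_square)
    finally show "z (j, k) * Az d r z j k \<le> (Az d r z j k) ^ 2 / (4 * real d) + real d * z (j, k) ^ 2" .
  qed (use d in auto)
  also have "(\<Sum>j<r. \<Sum>k<d. (Az d r z j k) ^ 2 / (4 * real d) + real d * z (j, k) ^ 2) = Sa / (4 * real d) + real d * Sz"
    unfolding Sa_def Sz_def sum.distrib sum_divide_distrib sum_distrib_left ..
  also have "2 * real d * (Sa / (4 * real d) + real d * Sz) = Sa / 2 + 2 * real d ^ 2 * Sz"
    using d by (simp add: field_simps power2_eq_square)
  finally show ?thesis unfolding Sa_def[symmetric] Sz_def[symmetric] by simp
qed

lemma resample_PiE:
  assumes "i \<in> I" "finite (G i)"
  shows "(\<Sum>f\<in>PiE I G. F f) * real (card (G i)) = (\<Sum>f\<in>PiE I G. \<Sum>x\<in>G i. F (f(i := x)))"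
proof -
  define J where "J = I - {i}"
  have I: "I = insert i J" and iJ: "i \<notin> J" using assms(1) unfolding J_def by auto
  have PI: "PiE I G = (\<lambda>(y, g). g(i := y)) ` (G i \<times> PiE J G)" unfolding I by (rule PiE_insert_eq)
  have inj: "inj_on (\<lambda>(y, g). g(i := y)) (G i \<times> PiE J G)" by (rule inj_combinator[OF iJ])
  have "(\<Sum>f\<in>PiE I G. F f) = (\<Sum>(y, g)\<in>G i \<times> PiE J G. F (g(i := y)))"
    unfolding PI by (subst sum.reindex[OF inj]) (simp add: case_prod_beta)
  also have "\<dots> = (\<Sum>y\<in>G i. \<Sum>g\<in>PiE J G. F (g(i := y)))" unfolding sum.cartesian_product[symmetric] by simp
  finally have L: "(\<Sum>f\<in>PiE I G. F f) = (\<Sum>y\<in>G i. \<Sum>g\<in>PiE J G. F (g(i := y)))" .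
  have "(\<Sum>f\<in>PiE I G. \<Sum>x\<in>G i. F (f(i := x))) = (\<Sum>(y, g)\<in>G i \<times> PiE J G. \<Sum>x\<in>G i. F (g(i := y, i := x)))"
    unfolding PI by (subst sum.reindex[OF inj]) (simp add: case_prod_beta)
  also have "\<dots> = (\<Sum>y\<in>G i. \<Sum>g\<in>PiE J G. \<Sum>x\<in>G i. F (g(i := x)))" unfolding sum.cartesian_product[symmetric] by simp
  also have "\<dots> = real (card (G i)) * (\<Sum>g\<in>PiE J G. \<Sum>x\<in>G i. F (g(i := x)))" by (rule sum_constant)
  also have "(\<Sum>g\<in>PiE J G. \<Sum>x\<in>G i. F (g(i := x))) = (\<Sum>x\<in>G i. \<Sum>g\<in>PiE J G. F (g(i := x)))" by (rule sum.swap)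
  finally have R: "(\<Sum>f\<in>PiE I G. \<Sum>x\<in>G i. F (f(i := x))) = real (card (G i)) * (\<Sum>x\<in>G i. \<Sum>g\<in>PiE J G. F (g(i := x)))" .
  show ?thesis unfolding L R by (rule mult.commute)
qed

definition upd :: "'a \<Rightarrow> bool \<times> bool \<Rightarrow> ('a \<Rightarrow> bool) \<times> ('a \<Rightarrow> bool) \<Rightarrow> ('a \<Rightarrow> bool) \<times> ('a \<Rightarrow> bool)" where
  "upd i x \<omega> = ((fst \<omega>)(i := fst x), (snd \<omega>)(i := snd x))"

definition atc :: "'a \<Rightarrow> ('a \<Rightarrow> bool) \<times> ('a \<Rightarrow> bool) \<Rightarrow> bool \<times> bool" where
  "atc i \<omega> = (fst \<omega> i, snd \<omega> i)"

lemma at_upd[simp]: "atc i (upd i x \<omega>) = x" "j \<noteq> i \<Longrightarrow> atc j (upd i x \<omega>) = atc j \<omega>"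
  unfolding atc_def upd_def by auto

abbreviation Pb :: "'a set \<Rightarrow> ('a \<Rightarrow> bool) set" where
  "Pb I \<equiv> PiE I (\<lambda>_. UNIV)"

lemma upd_in: "i \<in> I \<Longrightarrow> \<omega> \<in> Pb I \<times> Pb I \<Longrightarrow> upd i x \<omega> \<in> Pb I \<times> Pb I"
  unfolding upd_def by (auto simp: PiE_def extensional_def)

lemma sum_UNIV_pair: "(\<Sum>z\<in>(UNIV :: (bool \<times> bool) set). G z) = (\<Sum>x\<in>UNIV. \<Sum>y\<in>UNIV. G (x, y))"
  unfolding sum.cartesian_product UNIV_Times_UNIV by simp

lemma sum_pair: "(\<Sum>\<omega>\<in>A \<times> B. H \<omega>) = (\<Sum>b\<in>A. \<Sum>b'\<in>B. H (b, b'))"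
  by (simp add: sum.cartesian_product)

lemma resample_pair:
  fixes F :: "('a \<Rightarrow> bool) \<times> ('a \<Rightarrow> bool) \<Rightarrow> real"
  assumes "i \<in> I"
  shows "(\<Sum>\<omega>\<in>Pb I \<times> Pb I. F \<omega>) = (\<Sum>\<omega>\<in>Pb I \<times> Pb I. \<Sum>x\<in>UNIV. F (upd i x \<omega>)) / 4"
proof -
  have R: "(\<Sum>f\<in>Pb I. H f) = (\<Sum>f\<in>Pb I. \<Sum>x\<in>UNIV. H (f(i := x))) / 2" for H :: "('a \<Rightarrow> bool) \<Rightarrow> real"
    using resample_PiE[OF assms, of "\<lambda>_. UNIV" H] by simp
  have "(\<Sum>\<omega>\<in>Pb I \<times> Pb I. F \<omega>) = (\<Sum>b\<in>Pb I. \<Sum>b'\<in>Pb I. F (b, b'))"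
    by (simp add: sum.cartesian_product)
  also have "\<dots> = (\<Sum>b\<in>Pb I. (\<Sum>b'\<in>Pb I. \<Sum>y\<in>UNIV. F (b, b'(i := y))) / 2)"
    by (intro sum.cong refl R)
  also have "\<dots> = (\<Sum>b\<in>Pb I. \<Sum>x\<in>UNIV. (\<Sum>b'\<in>Pb I. \<Sum>y\<in>UNIV. F (b(i := x), b'(i := y))) / 2) / 2"
    by (rule R)
  also have "\<dots> = (\<Sum>b\<in>Pb I. \<Sum>b'\<in>Pb I. \<Sum>x\<in>UNIV. \<Sum>y\<in>UNIV. F (b(i := x), b'(i := y))) / 4"
    by (simp add: sum_divide_distrib[symmetric] sum.swap[of _ UNIV "Pb I"])
  also have "\<dots> = (\<Sum>\<omega>\<in>Pb I \<times> Pb I. \<Sum>x\<in>UNIV. F (upd i x \<omega>)) / 4"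
    unfolding upd_def sum_UNIV_pair sum_pair[of _ "Pb I" "Pb I"] by simp
  finally show ?thesis .
qed

lemma mgf_bound:
  fixes g M :: "'a \<Rightarrow> ('a \<Rightarrow> bool) \<times> ('a \<Rightarrow> bool) \<Rightarrow> real"
    and h :: "'a \<Rightarrow> ('a \<Rightarrow> bool) \<times> ('a \<Rightarrow> bool) \<Rightarrow> bool \<times> bool \<Rightarrow> real"
  assumes "finite T" "T \<subseteq> I"
    and bnd: "\<And>i \<omega>. i \<in> T \<Longrightarrow> \<omega> \<in> Pb I \<times> Pb I \<Longrightarrow> (\<Sum>x\<in>UNIV. exp (h i \<omega> x)) / 4 \<le> exp (M i \<omega>)"
    and invh: "\<And>i j \<omega> x. i \<in> T \<Longrightarrow> j \<in> T \<Longrightarrow> \<omega> \<in> Pb I \<times> Pb I \<Longrightarrow> h i (upd j x \<omega>) = h i \<omega>"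
    and invM: "\<And>i j \<omega> x. i \<in> T \<Longrightarrow> j \<in> T \<Longrightarrow> \<omega> \<in> Pb I \<times> Pb I \<Longrightarrow> M i (upd j x \<omega>) = M i \<omega>"
    and invD: "\<And>j \<omega> x. j \<in> T \<Longrightarrow> \<omega> \<in> Pb I \<times> Pb I \<Longrightarrow> D (upd j x \<omega>) = D \<omega>"
  shows "(\<Sum>\<omega>\<in>Pb I \<times> Pb I. exp (D \<omega> + (\<Sum>i\<in>T. h i \<omega> (atc i \<omega>))))
         \<le> (\<Sum>\<omega>\<in>Pb I \<times> Pb I. exp (D \<omega> + (\<Sum>i\<in>T. M i \<omega>)))"
  using assms(1,2) bnd invh invM invD
proof (induction T arbitrary: D rule: finite_induct)
  case empty
  then show ?case by simp
next
  case (insert i T)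
  let ?\<Omega> = "Pb I \<times> Pb I"
  have iI: "i \<in> I" using insert.prems(1) by auto
  define D' where "D' \<omega> = D \<omega> + (\<Sum>j\<in>T. h j \<omega> (atc j \<omega>))" for \<omega>
  have D'inv: "D' (upd i x \<omega>) = D' \<omega>" if "\<omega> \<in> ?\<Omega>" for x \<omega>
  proof -
    have "h j (upd i x \<omega>) (atc j (upd i x \<omega>)) = h j \<omega> (atc j \<omega>)" if "j \<in> T" for j
    proof -
      have ji: "j \<noteq> i" using that insert.hyps(2) by auto
      have "h j (upd i x \<omega>) = h j \<omega>" using insert.prems(3)[of j i \<omega> x] that \<open>\<omega> \<in> ?\<Omega>\<close> by auto
      moreover have "atc j (upd i x \<omega>) = atc j \<omega>" using ji by simp
      ultimately show ?thesis by simp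
    qed
    thus ?thesis unfolding D'_def using insert.prems(5)[of i \<omega> x] that by simp
  qed
  have "(\<Sum>\<omega>\<in>?\<Omega>. exp (D \<omega> + (\<Sum>j\<in>insert i T. h j \<omega> (atc j \<omega>))))
      = (\<Sum>\<omega>\<in>?\<Omega>. exp (D' \<omega> + h i \<omega> (atc i \<omega>)))"
    unfolding D'_def using insert.hyps by (simp add: algebra_simps)
  also have "\<dots> = (\<Sum>\<omega>\<in>?\<Omega>. \<Sum>x\<in>UNIV. exp (D' (upd i x \<omega>) + h i (upd i x \<omega>) (atc i (upd i x \<omega>)))) / 4"
    by (rule resample_pair[OF iI])
  also have "\<dots> = (\<Sum>\<omega>\<in>?\<Omega>. exp (D' \<omega>) * ((\<Sum>x\<in>UNIV. exp (h i \<omega> x)) / 4))"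
    unfolding sum_divide_distrib
    by (intro sum.cong refl) (simp add: D'inv insert.prems(3) exp_add sum_distrib_left sum_divide_distrib)
  also have "\<dots> \<le> (\<Sum>\<omega>\<in>?\<Omega>. exp (D' \<omega>) * exp (M i \<omega>))"
    by (intro sum_mono mult_left_mono insert.prems(2)) auto
  also have "\<dots> = (\<Sum>\<omega>\<in>?\<Omega>. exp ((D \<omega> + M i \<omega>) + (\<Sum>j\<in>T. h j \<omega> (atc j \<omega>))))"
    unfolding D'_def by (simp add: exp_add[symmetric] algebra_simps)
  also have "\<dots> \<le> (\<Sum>\<omega>\<in>?\<Omega>. exp ((D \<omega> + M i \<omega>) + (\<Sum>j\<in>T. M j \<omega>)))"
  proof (rule insert.IH)
    show "T \<subseteq> I" using insert.prems(1) by auto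
  qed (use insert.prems in auto)
  also have "\<dots> = (\<Sum>\<omega>\<in>?\<Omega>. exp (D \<omega> + (\<Sum>j\<in>insert i T. M j \<omega>)))"
    using insert.hyps by (simp add: algebra_simps)
  finally show ?case .
qed

definition hv :: "bool \<times> bool \<Rightarrow> real" where
  "hv x = sgn_bit (fst x) - sgn_bit (snd x)"

definition dl :: "(nat \<times> nat \<Rightarrow> bool) \<times> (nat \<times> nat \<Rightarrow> bool) \<Rightarrow> nat \<times> nat \<Rightarrow> real" where
  "dl \<omega> i = delta_of (fst \<omega>) (snd \<omega>) i"

lemma dl_hv: "dl \<omega> i = hv (atc i \<omega>)"
  unfolding dl_def hv_def delta_of_def atc_def by simp

lemma sum_bb: "(\<Sum>x\<in>(UNIV :: (bool \<times> bool) set). G x) = G (True, True) + G (True, False) + G (False, True) + (G (False, False) :: real)"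
  unfolding sum_UNIV_pair UNIV_bool by (simp add: algebra_simps)

lemma hv_vals[simp]: "hv (True, True) = 0" "hv (False, False) = 0" "hv (True, False) = -2" "hv (False, True) = 2"
  unfolding hv_def sgn_bit_def by simp_all

lemma hv_sq_le: "hv x ^ 2 \<le> 4"
  by (cases x) (auto simp: hv_def sgn_bit_def)

lemma dl_sq_le: "dl \<omega> i ^ 2 \<le> 4"
  unfolding dl_hv by (rule hv_sq_le)

abbreviation Iset :: "nat \<Rightarrow> nat \<Rightarrow> (nat \<times> nat) set" where
  "Iset r d \<equiv> {..<r} \<times> {..<d}"

lemma dd:
  assumes "i \<in> I" "i' \<in> I"
  shows "(\<Sum>\<omega>\<in>Pb I \<times> Pb I. dl \<omega> i * dl \<omega> i') = (if i = i' then 2 * real (card (Pb I \<times> Pb I)) else 0)"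
proof -
  have "(\<Sum>\<omega>\<in>Pb I \<times> Pb I. dl \<omega> i * dl \<omega> i') = (\<Sum>\<omega>\<in>Pb I \<times> Pb I. \<Sum>x\<in>UNIV. dl (upd i x \<omega>) i * dl (upd i x \<omega>) i') / 4"
    by (rule resample_pair[OF assms(1)])
  also have "\<dots> = (\<Sum>\<omega>\<in>Pb I \<times> Pb I. if i = i' then 8 else 0) / 4"
  proof (intro arg_cong[where f = "\<lambda>x. x / 4"] sum.cong refl)
    fix \<omega>
    show "(\<Sum>x\<in>UNIV. dl (upd i x \<omega>) i * dl (upd i x \<omega>) i') = (if i = i' then 8 else 0)"
    proof (cases "i = i'")
      case True
      thus ?thesis unfolding dl_hv by (simp add: sum_bb)
    next
      case False
      hence "atc i' (upd i x \<omega>) = atc i' \<omega>" for x by simp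
      thus ?thesis using False unfolding dl_hv by (simp add: sum_bb)
    qed
  qed
  also have "\<dots> = (if i = i' then 2 * real (card (Pb I \<times> Pb I)) else 0)" by simp
  finally show ?thesis .
qed

definition Aent :: "nat \<Rightarrow> nat \<times> nat \<Rightarrow> nat \<times> nat \<Rightarrow> real" where
  "Aent d i i' = A_entry d (fst i) (fst i') (snd i) (snd i')"

lemma qf_pairs: "quad_form d r \<delta> = (\<Sum>i\<in>Iset r d. \<Sum>i'\<in>Iset r d. \<delta> i * Aent d i i' * \<delta> i')"
proof -
  have "(\<Sum>i\<in>Iset r d. \<Sum>i'\<in>Iset r d. \<delta> i * Aent d i i' * \<delta> i') =
        (\<Sum>j<r. \<Sum>k<d. \<Sum>j'<r. \<Sum>k'<d. \<delta> (j, k) * A_entry d j j' k k' * \<delta> (j', k'))"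
    unfolding sum_pair Aent_def by simp
  also have "\<dots> = quad_form d r \<delta>"
    unfolding quad_form_def by (rule sum.cong[OF refl], rule sum.swap)
  finally show ?thesis by simp
qed

lemma expect_sum:
  assumes "prime d"
  shows "(\<Sum>\<omega>\<in>Pb (Iset r d) \<times> Pb (Iset r d). quad_form d r (dl \<omega>))
           = 2 * real (card (Pb (Iset r d) \<times> Pb (Iset r d))) * real d ^ 2 * real r"
proof -
  have d: "d > 0" using assms prime_gt_0_nat by blast
  let ?\<Omega> = "Pb (Iset r d) \<times> Pb (Iset r d)"
  let ?I = "Iset r d"
  have "(\<Sum>\<omega>\<in>?\<Omega>. quad_form d r (dl \<omega>)) = (\<Sum>\<omega>\<in>?\<Omega>. \<Sum>i\<in>?I. \<Sum>i'\<in>?I. Aent d i i' * (dl \<omega> i * dl \<omega> i'))"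
    unfolding qf_pairs by (simp add: mult_ac)
  also have "\<dots> = (\<Sum>i\<in>?I. \<Sum>i'\<in>?I. \<Sum>\<omega>\<in>?\<Omega>. Aent d i i' * (dl \<omega> i * dl \<omega> i'))"
    by (subst sum.swap, rule sum.cong[OF refl], rule sum.swap)
  also have "\<dots> = (\<Sum>i\<in>?I. \<Sum>i'\<in>?I. Aent d i i' * (if i = i' then 2 * real (card ?\<Omega>) else 0))"
    by (intro sum.cong refl) (simp add: sum_distrib_left[symmetric] dd)
  also have "\<dots> = (\<Sum>i\<in>?I. real d * (2 * real (card ?\<Omega>)))"
  proof (intro sum.cong refl)
    fix i assume i: "i \<in> ?I"
    have "Aent d i i = real d" unfolding Aent_def using i A_diag[OF d] by auto
    thus "(\<Sum>i'\<in>?I. Aent d i i' * (if i = i' then 2 * real (card ?\<Omega>) else 0)) = real d * (2 * real (card ?\<Omega>))"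
      using i by (simp add: if_distrib cong: if_cong)
  qed
  also have "\<dots> = 2 * real (card ?\<Omega>) * real d ^ 2 * real r"
    by (simp add: card_cartesian_product power2_eq_square)
  finally show ?thesis .
qed

lemma cosh_exp_le: "(exp y + exp (- y)) / 2 \<le> exp ((y::real) ^ 2 / 2)"
proof -
  define a where "a = \<bar>y\<bar>"
  have a0: "a \<ge> 0" unfolding a_def by simp
  have sym: "exp y + exp (- y) = exp a + exp (- a)" unfolding a_def by (cases "y \<ge> 0") auto
  have "- (2 * a) * (1 / 2) + ln (1 + (1 / 2) * (exp (2 * a) - 1)) \<le> (2 * a) ^ 2 / 8"
    using Hoeffdings_lemma_aux[of "2 * a" "1 / 2"] a0 by simp
  hence "ln ((1 + exp (2 * a)) / 2) \<le> a + a ^ 2 / 2"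
    by (simp add: field_simps power2_eq_square)
  hence "(1 + exp (2 * a)) / 2 \<le> exp (a + a ^ 2 / 2)"
    by (metis add_pos_pos divide_pos_pos exp_gt_zero exp_le_cancel_iff exp_ln zero_less_one zero_less_numeral)
  also have "\<dots> = exp a * exp (a ^ 2 / 2)" by (simp add: exp_add)
  finally have "(1 + exp (2 * a)) / 2 \<le> exp a * exp (a ^ 2 / 2)" .
  hence "exp (- a) * ((1 + exp (2 * a)) / 2) \<le> exp (- a) * (exp a * exp (a ^ 2 / 2))"
    by (intro mult_left_mono) auto
  moreover have "exp (- a) * ((1 + exp (2 * a)) / 2) = (exp a + exp (- a)) / 2"
  proof -
    have "exp (- a) * exp (2 * a) = exp a" by (simp add: exp_add[symmetric])
    thus ?thesis by (simp add: field_simps)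
  qed
  moreover have "exp (- a) * (exp a * exp (a ^ 2 / 2)) = exp (y ^ 2 / 2)"
    unfolding a_def by (simp add: exp_minus field_simps)
  ultimately show ?thesis unfolding sym by simp
qed

lemma mgf_pt: "(\<Sum>x\<in>UNIV. exp (- u * hv x)) / 4 \<le> exp (u ^ 2)"
proof -
  have "(\<Sum>x\<in>UNIV. exp (- u * hv x)) / 4 = ((exp u + exp (- u)) / 2) ^ 2"
  proof -
    have "exp u * exp u = exp (2 * u)" "exp (- u) * exp (- u) = exp (- (2 * u))" "exp u * exp (- u) = 1"
      by (simp_all add: exp_add[symmetric])
    thus ?thesis unfolding sum_bb by (simp add: power2_eq_square field_simps)
  qed
  also have "\<dots> \<le> exp (u ^ 2 / 2) ^ 2"
    by (rule power_mono[OF cosh_exp_le]) (simp add: add_nonneg_nonneg)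
  also have "\<dots> = exp (u ^ 2)" by (simp add: exp_add[symmetric] power2_eq_square)
  finally show ?thesis .
qed

lemma count_sets:
  assumes "finite I" "i \<in> I" "i' \<in> I" "i \<noteq> i'"
  shows "card {T \<in> Pow I. i \<in> T \<and> i' \<notin> T} = 2 ^ (card I - 2)"
proof -
  have eq: "{T \<in> Pow I. i \<in> T \<and> i' \<notin> T} = insert i ` Pow (I - {i, i'})"
  proof
    show "{T \<in> Pow I. i \<in> T \<and> i' \<notin> T} \<subseteq> insert i ` Pow (I - {i, i'})"
    proof
      fix T assume T: "T \<in> {T \<in> Pow I. i \<in> T \<and> i' \<notin> T}"
      hence "T = insert i (T - {i})" "T - {i} \<in> Pow (I - {i, i'})" by auto
      thus "T \<in> insert i ` Pow (I - {i, i'})" by blast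
    qed
  next
    show "insert i ` Pow (I - {i, i'}) \<subseteq> {T \<in> Pow I. i \<in> T \<and> i' \<notin> T}"
    proof
      fix T assume "T \<in> insert i ` Pow (I - {i, i'})"
      then obtain S where S: "S \<subseteq> I - {i, i'}" "T = insert i S" by auto
      thus "T \<in> {T \<in> Pow I. i \<in> T \<and> i' \<notin> T}" using assms(2,4) by blast
    qed
  qed
  have inj: "inj_on (insert i) (Pow (I - {i, i'}))"
  proof (rule inj_onI)
    fix A B assume "A \<in> Pow (I - {i, i'})" "B \<in> Pow (I - {i, i'})" "insert i A = insert i B"
    thus "A = B" using insert_ident[of i A B] by blast
  qed
  have "card {T \<in> Pow I. i \<in> T \<and> i' \<notin> T} = card (Pow (I - {i, i'}))"
    unfolding eq by (rule card_image[OF inj])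
  also have "\<dots> = 2 ^ card (I - {i, i'})" using assms(1) by (simp add: card_Pow)
  also have "card (I - {i, i'}) = card I - 2"
    using assms by (subst card_Diff_subset) auto
  finally show ?thesis .
qed

lemma card_le_sum:
  assumes "finite S" "\<And>\<omega>. \<omega> \<in> S \<Longrightarrow> \<omega> \<in> E \<Longrightarrow> 1 \<le> F \<omega>" "\<And>\<omega>. \<omega> \<in> S \<Longrightarrow> 0 \<le> (F \<omega> :: real)"
  shows "real (card (S \<inter> E)) \<le> (\<Sum>\<omega>\<in>S. F \<omega>)"
proof -
  have "real (card (S \<inter> E)) = (\<Sum>\<omega>\<in>S \<inter> E. 1)" by simp
  also have "\<dots> \<le> (\<Sum>\<omega>\<in>S \<inter> E. F \<omega>)" by (rule sum_mono) (use assms(2) in auto)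
  also have "\<dots> \<le> (\<Sum>\<omega>\<in>S. F \<omega>)" by (rule sum_mono2) (use assms in auto)
  finally show ?thesis .
qed

lemma decouple:
  assumes "finite I"
  shows "(\<Sum>T\<in>Pow I. \<Sum>i\<in>I. \<Sum>i'\<in>I. if i \<in> T \<and> i' \<notin> T then F i i' else 0)
         = 2 ^ (card I - 2) * (\<Sum>i\<in>I. \<Sum>i'\<in>I. if i' \<noteq> i then F i i' else (0::real))"
proof -
  have "(\<Sum>T\<in>Pow I. \<Sum>i\<in>I. \<Sum>i'\<in>I. if i \<in> T \<and> i' \<notin> T then F i i' else 0)
      = (\<Sum>i\<in>I. \<Sum>i'\<in>I. \<Sum>T\<in>Pow I. if i \<in> T \<and> i' \<notin> T then F i i' else 0)"
    by (subst sum.swap, rule sum.cong[OF refl], rule sum.swap)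
  also have "\<dots> = (\<Sum>i\<in>I. \<Sum>i'\<in>I. 2 ^ (card I - 2) * (if i' \<noteq> i then F i i' else 0))"
  proof (intro sum.cong refl)
    fix i i' assume i: "i \<in> I" and i': "i' \<in> I"
    have "(\<Sum>T\<in>Pow I. if i \<in> T \<and> i' \<notin> T then F i i' else 0) = (\<Sum>T\<in>{T \<in> Pow I. i \<in> T \<and> i' \<notin> T}. F i i')"
      using sum.inter_filter[of "Pow I" "\<lambda>_. F i i'" "\<lambda>T. i \<in> T \<and> i' \<notin> T"] assms by simp
    also have "\<dots> = real (card {T \<in> Pow I. i \<in> T \<and> i' \<notin> T}) * F i i'" by simp
    also have "\<dots> = 2 ^ (card I - 2) * (if i' \<noteq> i then F i i' else 0)"
    proof (cases "i' = i")
      case True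
      hence "{T \<in> Pow I. i \<in> T \<and> i' \<notin> T} = {}" by auto
      thus ?thesis using True by simp
    next
      case False
      thus ?thesis using count_sets[OF assms i i'] by simp
    qed
    finally show "(\<Sum>T\<in>Pow I. if i \<in> T \<and> i' \<notin> T then F i i' else 0) = 2 ^ (card I - 2) * (if i' \<noteq> i then F i i' else 0)" .
  qed
  also have "\<dots> = 2 ^ (card I - 2) * (\<Sum>i\<in>I. \<Sum>i'\<in>I. if i' \<noteq> i then F i i' else 0)"
    by (simp add: sum_distrib_left)
  finally show ?thesis .
qed

abbreviation Om :: "nat \<Rightarrow> nat \<Rightarrow> ((nat \<times> nat \<Rightarrow> bool) \<times> (nat \<times> nat \<Rightarrow> bool)) set" where
  "Om r d \<equiv> Pb (Iset r d) \<times> Pb (Iset r d)"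

definition Fq :: "nat \<Rightarrow> (nat \<times> nat \<Rightarrow> bool) \<times> (nat \<times> nat \<Rightarrow> bool) \<Rightarrow> nat \<times> nat \<Rightarrow> nat \<times> nat \<Rightarrow> real" where
  "Fq d \<omega> i i' = dl \<omega> i * Aent d i i' * dl \<omega> i'"

definition Qf where
  "Qf d r \<omega> = (\<Sum>i\<in>Iset r d. \<Sum>i'\<in>Iset r d. if i' \<noteq> i then Fq d \<omega> i i' else 0)"

definition QT where
  "QT d r T \<omega> = (\<Sum>i\<in>Iset r d. \<Sum>i'\<in>Iset r d. if i \<in> T \<and> i' \<notin> T then Fq d \<omega> i i' else 0)"

definition aT where
  "aT d r T \<omega> i = (\<Sum>i'\<in>Iset r d. if i' \<notin> T then Aent d i i' * dl \<omega> i' else 0)"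

lemma split_X:
  assumes "d > 0"
  shows "quad_form d r (dl \<omega>) = real d * (\<Sum>i\<in>Iset r d. dl \<omega> i ^ 2) + Qf d r \<omega>"
proof -
  have "quad_form d r (dl \<omega>) = (\<Sum>i\<in>Iset r d. \<Sum>i'\<in>Iset r d. (if i' = i then Fq d \<omega> i i else 0) + (if i' \<noteq> i then Fq d \<omega> i i' else 0))"
    unfolding qf_pairs Fq_def by (intro sum.cong refl) auto
  also have "\<dots> = (\<Sum>i\<in>Iset r d. Fq d \<omega> i i) + Qf d r \<omega>"
    unfolding sum.distrib Qf_def by simp
  also have "(\<Sum>i\<in>Iset r d. Fq d \<omega> i i) = real d * (\<Sum>i\<in>Iset r d. dl \<omega> i ^ 2)"
    unfolding sum_distrib_left
  proof (intro sum.cong refl)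
    fix i assume "i \<in> Iset r d"
    hence "Aent d i i = real d" unfolding Aent_def using A_diag[OF assms] by auto
    thus "Fq d \<omega> i i = real d * dl \<omega> i ^ 2" unfolding Fq_def by (simp add: power2_eq_square)
  qed
  finally show ?thesis .
qed

lemma QT_alt: assumes "T \<subseteq> Iset r d" shows "QT d r T \<omega> = (\<Sum>i\<in>T. dl \<omega> i * aT d r T \<omega> i)"
proof -
  have "QT d r T \<omega> = (\<Sum>i\<in>Iset r d. if i \<in> T then dl \<omega> i * aT d r T \<omega> i else 0)"
    unfolding QT_def aT_def Fq_def
    by (intro sum.cong refl) (auto simp: sum_distrib_left intro!: sum.cong simp: mult_ac)
  also have "\<dots> = (\<Sum>i\<in>Iset r d \<inter> T. dl \<omega> i * aT d r T \<omega> i)"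
    by (simp add: sum.inter_restrict)
  also have "Iset r d \<inter> T = T" using assms by auto
  finally show ?thesis .
qed

lemma aT_Az: assumes "i \<in> Iset r d"
  shows "aT d r T \<omega> i = Az d r (\<lambda>i'. if i' \<notin> T then dl \<omega> i' else 0) (fst i) (snd i)"
  unfolding aT_def Az_def sum_pair Aent_def by (intro sum.cong refl) auto

lemma aT_sq:
  assumes "prime d" "odd d" "r \<le> d"
  shows "(\<Sum>i\<in>Iset r d. (aT d r T \<omega> i) ^ 2) \<le> 16 * real d ^ 2 * (real r * real d)"
proof -
  define z where "z i' = (if i' \<notin> T then dl \<omega> i' else 0)" for i'
  have "(\<Sum>i\<in>Iset r d. (aT d r T \<omega> i) ^ 2) = (\<Sum>j<r. \<Sum>k<d. (Az d r z j k) ^ 2)"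
    unfolding sum_pair z_def by (intro sum.cong refl) (simp add: aT_Az)
  also have "\<dots> \<le> 4 * real d ^ 2 * (\<Sum>j<r. \<Sum>k<d. (z (j, k)) ^ 2)" by (rule A_norm[OF assms])
  also have "(\<Sum>j<r. \<Sum>k<d. (z (j, k)) ^ 2) \<le> (\<Sum>j<r. \<Sum>k<d. 4)"
    by (intro sum_mono) (simp add: z_def dl_sq_le)
  also have "(\<Sum>j<r. \<Sum>k<d. (4::real)) = 4 * (real r * real d)" by simp
  finally show ?thesis by (simp add: mult_left_mono)
qed

lemma aT_upd: assumes "j \<in> T" shows "aT d r T (upd j x \<omega>) i = aT d r T \<omega> i"
  unfolding aT_def
proof (intro sum.cong refl)
  fix i' show "(if i' \<notin> T then Aent d i i' * dl (upd j x \<omega>) i' else 0) = (if i' \<notin> T then Aent d i i' * dl \<omega> i' else 0)"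
    using assms by (cases "i' = j") (auto simp: dl_hv)
qed

lemma mgf_T:
  assumes "prime d" "odd d" "r \<le> d" "T \<subseteq> Iset r d"
  shows "(\<Sum>\<omega>\<in>Om r d. exp (- 4 * \<theta> * QT d r T \<omega>)) \<le> real (card (Om r d)) * exp (256 * \<theta> ^ 2 * real d ^ 2 * (real r * real d))"
proof -
  let ?I = "Iset r d"
  have fT: "finite T" using assms(4) finite_subset by blast
  define h where "h i \<omega> x = - (4 * \<theta> * aT d r T \<omega> i) * hv x" for i \<omega> x
  define M where "M i \<omega> = (4 * \<theta> * aT d r T \<omega> i) ^ 2" for i \<omega>
  have "(\<Sum>\<omega>\<in>Om r d. exp (- 4 * \<theta> * QT d r T \<omega>)) = (\<Sum>\<omega>\<in>Om r d. exp ((\<lambda>_. 0) \<omega> + (\<Sum>i\<in>T. h i \<omega> (atc i \<omega>))))"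
    unfolding QT_alt[OF assms(4)] h_def dl_hv sum_distrib_left by (simp add: mult_ac)
  also have "\<dots> \<le> (\<Sum>\<omega>\<in>Om r d. exp ((\<lambda>_. 0) \<omega> + (\<Sum>i\<in>T. M i \<omega>)))"
  proof (rule mgf_bound[OF fT assms(4)])
    fix i \<omega> show "(\<Sum>x\<in>UNIV. exp (h i \<omega> x)) / 4 \<le> exp (M i \<omega>)"
      unfolding h_def M_def by (rule mgf_pt)
  qed (simp_all add: h_def M_def aT_upd)
  also have "\<dots> \<le> (\<Sum>\<omega>\<in>Om r d. exp (256 * \<theta> ^ 2 * real d ^ 2 * (real r * real d)))"
  proof (intro sum_mono)
    fix \<omega>
    have "(\<Sum>i\<in>T. M i \<omega>) = 16 * \<theta> ^ 2 * (\<Sum>i\<in>T. (aT d r T \<omega> i) ^ 2)"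
      unfolding M_def sum_distrib_left by (simp add: power_mult_distrib)
    also have "\<dots> \<le> 16 * \<theta> ^ 2 * (\<Sum>i\<in>?I. (aT d r T \<omega> i) ^ 2)"
      by (intro mult_left_mono sum_mono2 assms(4)) auto
    also have "\<dots> \<le> 16 * \<theta> ^ 2 * (16 * real d ^ 2 * (real r * real d))"
      by (intro mult_left_mono aT_sq assms(1-3)) auto
    finally show "exp ((\<lambda>_. 0) \<omega> + (\<Sum>i\<in>T. M i \<omega>)) \<le> exp (256 * \<theta> ^ 2 * real d ^ 2 * (real r * real d))"
      by simp
  qed
  also have "\<dots> = real (card (Om r d)) * exp (256 * \<theta> ^ 2 * real d ^ 2 * (real r * real d))" by simp
  finally show ?thesis .
qed

lemma jensen_step:
  assumes "card (Iset r d) \<ge> 2"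
  shows "exp (- \<theta> * Qf d r \<omega>) \<le> (\<Sum>T\<in>Pow (Iset r d). (1 / 2 ^ card (Iset r d)) * exp (- 4 * \<theta> * QT d r T \<omega>))"
proof -
  let ?I = "Iset r d" and ?N = "card (Iset r d)"
  have N: "(2::real) ^ ?N = 4 * 2 ^ (?N - 2)"
  proof -
    have "?N = (?N - 2) + 2" using assms by simp
    hence "(2::real) ^ ?N = 2 ^ (?N - 2) * 2 ^ 2" by (metis power_add)
    thus ?thesis by simp
  qed
  have dec: "(\<Sum>T\<in>Pow ?I. QT d r T \<omega>) = 2 ^ (?N - 2) * Qf d r \<omega>"
    unfolding QT_def Qf_def by (rule decouple) simp
  have "(\<Sum>T\<in>Pow ?I. (1 / 2 ^ ?N) *\<^sub>R (- 4 * \<theta> * QT d r T \<omega>)) = (1 / 2 ^ ?N) * (- 4 * \<theta>) * (\<Sum>T\<in>Pow ?I. QT d r T \<omega>)"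
    by (simp only: real_scaleR_def mult.assoc[symmetric] sum_distrib_left[symmetric])
  also have "\<dots> = - \<theta> * Qf d r \<omega>" unfolding dec N by (simp add: field_simps)
  finally have eq: "(\<Sum>T\<in>Pow ?I. (1 / 2 ^ ?N) *\<^sub>R (- 4 * \<theta> * QT d r T \<omega>)) = - \<theta> * Qf d r \<omega>" .
  have cv: "convex_on UNIV exp" using convex_on_exp[of 1] by simp
  have "exp (\<Sum>T\<in>Pow ?I. (1 / 2 ^ ?N) *\<^sub>R (- 4 * \<theta> * QT d r T \<omega>)) \<le> (\<Sum>T\<in>Pow ?I. (1 / 2 ^ ?N) * exp (- 4 * \<theta> * QT d r T \<omega>))"
    by (rule convex_on_sum[OF _ _ cv]) (auto simp: card_Pow)
  thus ?thesis unfolding eq .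
qed

lemma fin_Om: "finite (Om r d)" by (intro finite_cartesian_product finite_PiE) auto
lemma ne_Om: "Om r d \<noteq> {}" by (simp add: PiE_eq_empty_iff)

lemma card_I: "card (Iset r d) = r * d" by (simp add: card_cartesian_product)

lemma E2_bound:
  assumes "prime d" "odd d" "1 \<le> r" "r \<le> d"
  shows "real (card (Om r d \<inter> {\<omega>. Qf d r \<omega> \<le> - (real d ^ 2 * real r / 2)}))
         \<le> real (card (Om r d)) * exp (- (real r * real d) / 4096)"
proof -
  let ?I = "Iset r d" and ?N = "card (Iset r d)"
  have d2: "d \<ge> 2" using assms(1) prime_ge_2_nat by blast
  have dpos: "real d > 0" using d2 by simp
  have N2: "?N \<ge> 2" unfolding card_I using d2 assms(3) by (metis le_trans mult_le_mono nat_mult_1)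
  define \<theta> :: real where "\<theta> = 1 / (1024 * real d)"
  have th: "\<theta> > 0" unfolding \<theta>_def using dpos by simp
  define t where "t = real d ^ 2 * real r / 2"
  define K where "K = exp (256 * \<theta> ^ 2 * real d ^ 2 * (real r * real d))"
  have "real (card (Om r d \<inter> {\<omega>. Qf d r \<omega> \<le> - t})) \<le> (\<Sum>\<omega>\<in>Om r d. exp (- \<theta> * (Qf d r \<omega> + t)))"
  proof (rule card_le_sum[OF fin_Om])
    fix \<omega> assume "\<omega> \<in> {\<omega>. Qf d r \<omega> \<le> - t}"
    hence "0 \<le> - \<theta> * (Qf d r \<omega> + t)" using th by (simp add: mult_nonneg_nonpos)
    thus "1 \<le> exp (- \<theta> * (Qf d r \<omega> + t))" by simp
  qed simp
  also have "\<dots> = exp (- \<theta> * t) * (\<Sum>\<omega>\<in>Om r d. exp (- \<theta> * Qf d r \<omega>))"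
    by (simp add: sum_distrib_left exp_add[symmetric] algebra_simps)
  also have "(\<Sum>\<omega>\<in>Om r d. exp (- \<theta> * Qf d r \<omega>)) \<le> (\<Sum>\<omega>\<in>Om r d. \<Sum>T\<in>Pow ?I. (1 / 2 ^ ?N) * exp (- 4 * \<theta> * QT d r T \<omega>))"
    by (intro sum_mono jensen_step N2)
  also have "\<dots> = (\<Sum>T\<in>Pow ?I. (1 / 2 ^ ?N) * (\<Sum>\<omega>\<in>Om r d. exp (- 4 * \<theta> * QT d r T \<omega>)))"
    by (subst sum.swap) (simp add: sum_distrib_left)
  also have "\<dots> \<le> (\<Sum>T\<in>Pow ?I. (1 / 2 ^ ?N) * (real (card (Om r d)) * K))"
    unfolding K_def by (intro sum_mono mult_left_mono mgf_T assms(1,2,4)) auto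
  also have "\<dots> = real (card (Om r d)) * K" by (simp add: card_Pow)
  finally have "real (card (Om r d \<inter> {\<omega>. Qf d r \<omega> \<le> - t})) \<le> exp (- \<theta> * t) * (real (card (Om r d)) * K)"
    by (simp add: mult_left_mono)
  also have "exp (- \<theta> * t) * (real (card (Om r d)) * K) = real (card (Om r d)) * (exp (- \<theta> * t) * K)"
    by (simp add: mult_ac)
  also have "exp (- \<theta> * t) * K = exp (- \<theta> * t + 256 * \<theta> ^ 2 * real d ^ 2 * (real r * real d))"
    unfolding K_def by (rule exp_add[symmetric])
  also have "- \<theta> * t + 256 * \<theta> ^ 2 * real d ^ 2 * (real r * real d) = - (real r * real d) / 4096"
    unfolding \<theta>_def t_def using dpos by (simp add: field_simps power2_eq_square)
  finally show ?thesis unfolding t_def .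
qed

lemma E1_bound:
  shows "real (card (Om r d \<inter> {\<omega>. (\<Sum>i\<in>Iset r d. dl \<omega> i ^ 2) \<le> real r * real d}))
         \<le> real (card (Om r d)) * exp (- (real r * real d) / 4096)"
proof -
  let ?I = "Iset r d"
  define n where "n = real r * real d"
  have n0: "n \<ge> 0" unfolding n_def by simp
  have "real (card (Om r d \<inter> {\<omega>. (\<Sum>i\<in>?I. dl \<omega> i ^ 2) \<le> n})) \<le> (\<Sum>\<omega>\<in>Om r d. exp (n / 8 - (1 / 8) * (\<Sum>i\<in>?I. dl \<omega> i ^ 2)))"
  proof (rule card_le_sum[OF fin_Om])
    fix \<omega> assume "\<omega> \<in> {\<omega>. (\<Sum>i\<in>?I. dl \<omega> i ^ 2) \<le> n}"
    thus "1 \<le> exp (n / 8 - (1 / 8) * (\<Sum>i\<in>?I. dl \<omega> i ^ 2))" by simp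
  qed simp
  also have "\<dots> = (\<Sum>\<omega>\<in>Om r d. exp ((\<lambda>_. n / 8) \<omega> + (\<Sum>i\<in>?I. (\<lambda>i \<omega> x. - (1 / 8) * hv x ^ 2) i \<omega> (atc i \<omega>))))"
    unfolding dl_hv sum_distrib_left by (simp add: sum_negf)
  also have "\<dots> \<le> (\<Sum>\<omega>\<in>Om r d. exp ((\<lambda>_. n / 8) \<omega> + (\<Sum>i\<in>?I. (\<lambda>i \<omega>. ln (5 / 6)) i \<omega>)))"
  proof (rule mgf_bound)
    fix i \<omega>
    have e: "exp (- 1 / 2 :: real) \<le> 2 / 3"
    proof -
      have "(3 / 2 :: real) \<le> exp (1 / 2)" using exp_ge_add_one_self[of "1 / 2 :: real"] by simp
      hence "inverse (exp (1 / 2 :: real)) \<le> inverse (3 / 2)" by (intro le_imp_inverse_le) auto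
      thus ?thesis by (simp add: exp_minus[symmetric])
    qed
    have "(\<Sum>x\<in>UNIV. exp (- (1 / 8) * hv x ^ 2)) / 4 = (2 + 2 * exp (- 1 / 2)) / 4"
      unfolding sum_bb by simp
    also have "\<dots> \<le> 5 / 6" using e by simp
    also have "\<dots> = exp (ln (5 / 6))" by simp
    finally show "(\<Sum>x\<in>UNIV. exp ((\<lambda>i \<omega> x. - (1 / 8) * hv x ^ 2) i \<omega> x)) / 4 \<le> exp ((\<lambda>i \<omega>. ln (5 / 6)) i \<omega>)" by simp
  qed auto
  also have "\<dots> = real (card (Om r d)) * exp (n / 8 + n * ln (5 / 6))"
    by (simp add: card_I n_def)
  also have "exp (n / 8 + n * ln (5 / 6)) \<le> exp (- n / 4096)"
  proof -
    have a: "(1 - 1 / 4096) * (1 - 1 / 8) \<le> exp (- 1 / 4096 :: real) * exp (- 1 / 8)"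
      using exp_ge_add_one_self[of "- 1 / 4096 :: real"] exp_ge_add_one_self[of "- 1 / 8 :: real"]
      by (intro mult_mono) auto
    have b: "exp (- 1 / 4096 + - 1 / 8 :: real) = exp (- 1 / 4096) * exp (- 1 / 8)" by (rule exp_add)
    have c: "(5 / 6 :: real) \<le> (1 - 1 / 4096) * (1 - 1 / 8)" by simp
    have "(5 / 6 :: real) \<le> exp (- 1 / 4096 + - 1 / 8)" using a b c by linarith
    hence "(5 / 6 :: real) \<le> exp (- 1 / 4096 - 1 / 8)" by simp
    hence "ln (5 / 6) \<le> - 1 / 4096 - (1 / 8 :: real)"
      by (metis ln_exp ln_le_cancel_iff exp_gt_zero zero_less_divide_iff zero_less_numeral)
    hence "n * ln (5 / 6) \<le> n * (- 1 / 4096 - 1 / 8)" using n0 by (intro mult_left_mono) auto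
    thus ?thesis by (simp add: algebra_simps)
  qed
  finally show ?thesis unfolding n_def by (simp add: mult_left_mono)
qed

lemma tail_card:
  assumes "prime d" "odd d" "1 \<le> r" "r \<le> d"
  shows "real (card (Om r d \<inter> {\<omega>. quad_form d r (dl \<omega>) \<le> real d ^ 2 * real r / 2}))
         \<le> 2 * real (card (Om r d)) * exp (- (real r * real d) / 4096)"
proof -
  have d: "d > 0" using assms(1) prime_gt_0_nat by blast
  let ?E1 = "{\<omega>. (\<Sum>i\<in>Iset r d. dl \<omega> i ^ 2) \<le> real r * real d}"
  let ?E2 = "{\<omega>. Qf d r \<omega> \<le> - (real d ^ 2 * real r / 2)}"
  have sub: "Om r d \<inter> {\<omega>. quad_form d r (dl \<omega>) \<le> real d ^ 2 * real r / 2} \<subseteq> (Om r d \<inter> ?E1) \<union> (Om r d \<inter> ?E2)"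
  proof
    fix \<omega> assume h: "\<omega> \<in> Om r d \<inter> {\<omega>. quad_form d r (dl \<omega>) \<le> real d ^ 2 * real r / 2}"
    show "\<omega> \<in> (Om r d \<inter> ?E1) \<union> (Om r d \<inter> ?E2)"
    proof (cases "\<omega> \<in> ?E1")
      case False
      hence "(\<Sum>i\<in>Iset r d. dl \<omega> i ^ 2) > real r * real d" by simp
      hence "real d * (\<Sum>i\<in>Iset r d. dl \<omega> i ^ 2) \<ge> real d * (real r * real d)"
        using d by (intro mult_left_mono) auto
      moreover have "real d * (\<Sum>i\<in>Iset r d. dl \<omega> i ^ 2) + Qf d r \<omega> \<le> real d ^ 2 * real r / 2"
        using h split_X[OF d, of r \<omega>] by simp
      ultimately have "Qf d r \<omega> \<le> - (real d ^ 2 * real r / 2)"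
        by (simp add: power2_eq_square algebra_simps)
      thus ?thesis using h by simp
    qed (use h in auto)
  qed
  have "real (card (Om r d \<inter> {\<omega>. quad_form d r (dl \<omega>) \<le> real d ^ 2 * real r / 2}))
      \<le> real (card ((Om r d \<inter> ?E1) \<union> (Om r d \<inter> ?E2)))"
    using card_mono[OF _ sub] fin_Om by simp
  also have "\<dots> \<le> real (card (Om r d \<inter> ?E1)) + real (card (Om r d \<inter> ?E2))"
    using card_Un_le[of "Om r d \<inter> ?E1" "Om r d \<inter> ?E2"] by linarith
  also have "\<dots> \<le> real (card (Om r d)) * exp (- (real r * real d) / 4096) + real (card (Om r d)) * exp (- (real r * real d) / 4096)"
    by (intro add_mono E1_bound E2_bound assms)
  finally show ?thesis by simp
qed

lemma bit_pairs_eq: "bit_pairs r d = pmf_of_set (Om r d)"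
  unfolding bit_pairs_def bitstrings_def ..

lemma dl_pair[simp]: "dl (b, b') = delta_of b b'" by (intro ext) (simp add: dl_def)

lemma integrand_eq: "(\<lambda>(b, b'). quad_form d r (delta_of b b')) = (\<lambda>\<omega>. quad_form d r (dl \<omega>))"
  by (intro ext) (simp add: dl_def split: prod.split)

theorem mainTheorem19:
  shows "(\<forall>d r. prime d \<and> odd d \<and> 1 \<le> r \<and> r \<le> d \<longrightarrow>
            measure_pmf.expectation (bit_pairs r d)
              (\<lambda>(b, b'). quad_form d r (delta_of b b')) = 2 * real d ^ 2 * real r)
       \<and> (\<exists>c C. c > 0 \<and> C > 0 \<and>
            (\<forall>d r. prime d \<and> odd d \<and> 1 \<le> r \<and> r \<le> d \<longrightarrow>
               measure_pmf.prob (bit_pairs r d)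
                 {(b, b'). quad_form d r (delta_of b b') \<le> real d ^ 2 * real r / 2}
               \<le> C * exp (- c * real r * real d)))"
proof (intro conjI allI impI)
  fix d r :: nat assume a: "prime d \<and> odd d \<and> 1 \<le> r \<and> r \<le> d"
  have cpos: "card (Om r d) > 0" using fin_Om ne_Om by (simp add: card_gt_0_iff)
  show "measure_pmf.expectation (bit_pairs r d) (\<lambda>(b, b'). quad_form d r (delta_of b b')) = 2 * real d ^ 2 * real r"
    unfolding bit_pairs_eq integrand_eq integral_pmf_of_set[OF ne_Om fin_Om] expect_sum[OF conjunct1[OF a]]
    using cpos by simp
next
  show "\<exists>c C. c > 0 \<and> C > 0 \<and>
            (\<forall>d r. prime d \<and> odd d \<and> 1 \<le> r \<and> r \<le> d \<longrightarrow>
               measure_pmf.prob (bit_pairs r d)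
                 {(b, b'). quad_form d r (delta_of b b') \<le> real d ^ 2 * real r / 2}
               \<le> C * exp (- c * real r * real d))"
  proof (intro exI conjI allI impI)
    fix d r :: nat assume a: "prime d \<and> odd d \<and> 1 \<le> r \<and> r \<le> d"
    have cpos: "card (Om r d) > 0" using fin_Om ne_Om by (simp add: card_gt_0_iff)
    have ev: "{(b, b'). quad_form d r (delta_of b b') \<le> real d ^ 2 * real r / 2} = {\<omega>. quad_form d r (dl \<omega>) \<le> real d ^ 2 * real r / 2}"
      by auto
    have "measure_pmf.prob (bit_pairs r d) {(b, b'). quad_form d r (delta_of b b') \<le> real d ^ 2 * real r / 2}
        = real (card (Om r d \<inter> {\<omega>. quad_form d r (dl \<omega>) \<le> real d ^ 2 * real r / 2})) / real (card (Om r d))"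
      unfolding bit_pairs_eq ev measure_pmf_of_set[OF ne_Om fin_Om] ..
    also have "\<dots> \<le> 2 * real (card (Om r d)) * exp (- (real r * real d) / 4096) / real (card (Om r d))"
      by (intro divide_right_mono tail_card) (use a in auto)
    also have "\<dots> = 2 * exp (- (1 / 4096) * real r * real d)" using cpos by simp
    finally show "measure_pmf.prob (bit_pairs r d) {(b, b'). quad_form d r (delta_of b b') \<le> real d ^ 2 * real r / 2}
        \<le> 2 * exp (- (1 / 4096) * real r * real d)" .
  qed auto
qed

end
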